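(* Let $f\in C^2(\mathbb{R}^d)$ with $\nabla f$ globally $L$-Lipschitz, $h>0$, $\beta\ge0$, $c\le\gamma_k\le C$ ($0<c\le C$), and $\beta+\frac h2<\frac cL$. Let $(x_k)$ be generated by $y_k=x_k+\alpha_k(x_k-x_{k-1})$, $x_{k+1}=y_k-s_k\nabla f(x_k+\frac\beta h(x_k-x_{k-1}))$ ($k\ge1$) with $\alpha_k=\frac1{1+\gamma_kh}$, $s_k=h^2\alpha_k$. Let $v_k=x_k-x_{k-1}$, $\tilde\alpha=\frac{\beta L}h+\frac1{h^2}$, and $V_k=f(x_k)+\frac{\tilde\alpha}2\|v_k\|^2$. Then for every $k\ge1$, $$V_{k+1}\le V_k-\delta\|v_{k+1}\|^2,\qquad\delta=\frac ch-\frac L2-\frac{\beta L}h>0.$$ *)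

theory Defs
  imports "HOL-Analysis.Analysis"
begin

end

theory Submission
  imports Defs
begin
lemma descent:
  fixes f :: "'a::euclidean_space \<Rightarrow> real" and g :: "'a \<Rightarrow> 'a"
  assumes grad: "\<And>z. (f has_derivative (\<lambda>v. g z \<bullet> v)) (at z)"
    and lip: "\<And>y z. norm (g y - g z) \<le> L * norm (y - z)"
  shows "f y \<le> f x + g x \<bullet> (y - x) + L / 2 * (norm (y - x))\<^sup>2"
proof -
  define d where "d = y - x"
  define \<phi> where "\<phi> t = f (x + t *\<^sub>R d) - t * (g x \<bullet> d) - L / 2 * t\<^sup>2 * (norm d)\<^sup>2" for t
  have D: "DERIV \<phi> t :> ((g (x + t *\<^sub>R d) - g x) \<bullet> d - L * t * (norm d)\<^sup>2)" for t
  proof -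
    have 1: "((\<lambda>t. x + t *\<^sub>R d) has_derivative (\<lambda>s. s *\<^sub>R d)) (at t)"
      by (auto intro!: derivative_eq_intros)
    have 2: "((\<lambda>t. f (x + t *\<^sub>R d)) has_derivative (\<lambda>s. g (x + t *\<^sub>R d) \<bullet> (s *\<^sub>R d))) (at t)"
      using has_derivative_compose[OF 1 grad] by simp
    have 3: "((\<lambda>t. f (x + t *\<^sub>R d)) has_real_derivative (g (x + t *\<^sub>R d) \<bullet> d)) (at t)"
      using 2 unfolding has_field_derivative_def by (simp add: mult.commute[of _ "g (x + t *\<^sub>R d) \<bullet> d"])
    show ?thesis unfolding \<phi>_def
      by (rule derivative_eq_intros 3 | simp)+ (simp add: inner_diff_left algebra_simps power2_eq_square)
  qed
  have "\<phi> 1 \<le> \<phi> 0"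
  proof (rule DERIV_nonpos_imp_nonincreasing[of 0 1])
    fix t :: real assume t: "0 \<le> t" "t \<le> 1"
    have "(g (x + t *\<^sub>R d) - g x) \<bullet> d \<le> norm (g (x + t *\<^sub>R d) - g x) * norm d"
      by (rule norm_cauchy_schwarz)
    also have "\<dots> \<le> L * norm (t *\<^sub>R d) * norm d"
      using lip[of "x + t *\<^sub>R d" x] by (intro mult_right_mono) auto
    also have "\<dots> = L * t * (norm d)\<^sup>2" using t by (simp add: power2_eq_square)
    finally show "\<exists>y. DERIV \<phi> t :> y \<and> y \<le> 0" using D[of t] by (intro exI[of _ "(g (x + t *\<^sub>R d) - g x) \<bullet> d - L * t * (norm d)\<^sup>2"]) auto
  qed simp
  thus ?thesis unfolding \<phi>_def d_def by simp
qed
theorem mainTheorem16: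
  fixes f :: "'a::euclidean_space \<Rightarrow> real"
    and g :: "'a \<Rightarrow> 'a"
    and H :: "'a \<Rightarrow> 'a \<Rightarrow>\<^sub>L 'a"
    and x :: "nat \<Rightarrow> 'a"
    and \<gamma> :: "nat \<Rightarrow> real"
    and L h \<beta> c C :: real
  assumes grad: "\<And>z. (f has_derivative (\<lambda>v. g z \<bullet> v)) (at z)"
    and hess: "\<And>z. (g has_derivative blinfun_apply (H z)) (at z)"
    and hess_cont: "continuous_on UNIV H"
    and Lpos: "L > 0"
    and lip: "\<And>y z. norm (g y - g z) \<le> L * norm (y - z)"
    and hpos: "h > 0" and bnn: "\<beta> \<ge> 0"
    and cpos: "0 < c" and cC: "c \<le> C"
    and gam: "\<And>k. k \<ge> 1 \<Longrightarrow> c \<le> \<gamma> k \<and> \<gamma> k \<le> C"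
    and step: "\<beta> + h / 2 < c / L"
    and rec: "\<And>k. k \<ge> 1 \<Longrightarrow>
       x (k + 1) = (x k + (1 / (1 + \<gamma> k * h)) *\<^sub>R (x k - x (k - 1)))
                   - (h\<^sup>2 * (1 / (1 + \<gamma> k * h))) *\<^sub>R
                       g (x k + (\<beta> / h) *\<^sub>R (x k - x (k - 1)))"
  shows "let v = (\<lambda>k. x k - x (k - 1));
             \<alpha>t = \<beta> * L / h + 1 / h\<^sup>2;
             V = (\<lambda>k. f (x k) + \<alpha>t / 2 * (norm (v k))\<^sup>2);
             \<delta> = c / h - L / 2 - \<beta> * L / h
         in \<delta> > 0 \<and> (\<forall>k\<ge>1. V (k + 1) \<le> V k - \<delta> * (norm (v (k + 1)))\<^sup>2)"
proof -
  define \<delta> where "\<delta> = c / h - L / 2 - \<beta> * L / h"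
  define \<alpha>t where "\<alpha>t = \<beta> * L / h + 1 / h\<^sup>2"
  have dpos: "\<delta> > 0"
  proof -
    have "L * (\<beta> + h / 2) < c" using step Lpos by (simp add: field_simps)
    hence "\<beta> * L + L * h / 2 < c" by (simp add: algebra_simps)
    hence "(\<beta> * L + L * h / 2) / h < c / h" using hpos by (simp add: divide_strict_right_mono)
    thus ?thesis unfolding \<delta>_def using hpos by (simp add: field_simps)
  qed
  have main: "f (x (k+1)) + \<alpha>t / 2 * (norm (x (k+1) - x k))\<^sup>2
      \<le> f (x k) + \<alpha>t / 2 * (norm (x k - x (k-1)))\<^sup>2 - \<delta> * (norm (x (k+1) - x k))\<^sup>2"
    if k: "k \<ge> 1" for k
  proof -
    define v where "v = x k - x (k - 1)"
    define w where "w = x (k+1) - x k"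
    define G where "G = g (x k + (\<beta> / h) *\<^sub>R v)"
    define \<gamma>' where "\<gamma>' = \<gamma> k"
    have gc: "c \<le> \<gamma>'" using gam[OF k] \<gamma>'_def by simp
    have gpos: "1 + \<gamma>' * h > 0" using gc cpos hpos by (smt (verit) mult_pos_pos)
    have wv: "w = (1 / (1 + \<gamma>' * h)) *\<^sub>R v - (h\<^sup>2 * (1 / (1 + \<gamma>' * h))) *\<^sub>R G"
      using rec[OF k] unfolding w_def v_def G_def \<gamma>'_def by (simp add: algebra_simps)
    have hG: "h\<^sup>2 *\<^sub>R G = v - (1 + \<gamma>' * h) *\<^sub>R w"
    proof -
      have "(1 + \<gamma>' * h) *\<^sub>R w = v - h\<^sup>2 *\<^sub>R G"
      proof -
        have e1: "(1 + \<gamma>' * h) * (1 / (1 + \<gamma>' * h)) = 1" using gpos by simp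
        have e2: "(1 + \<gamma>' * h) * (h\<^sup>2 * (1 / (1 + \<gamma>' * h))) = h\<^sup>2" using gpos by simp
        show ?thesis unfolding wv scaleR_diff_right scaleR_scaleR e1 e2 by simp
      qed
      thus ?thesis by (simp add: algebra_simps)
    qed
    have q: "h\<^sup>2 * (G \<bullet> w) = v \<bullet> w - (1 + \<gamma>' * h) * (norm w)\<^sup>2"
    proof -
      have "h\<^sup>2 * (G \<bullet> w) = (h\<^sup>2 *\<^sub>R G) \<bullet> w" by simp
      also have "\<dots> = v \<bullet> w - (1 + \<gamma>' * h) * (w \<bullet> w)" by (simp add: hG inner_diff_left)
      finally show ?thesis by (simp add: power2_norm_eq_inner)
    qed
    have d1: "f (x (k+1)) \<le> f (x k) + g (x k) \<bullet> w + L / 2 * (norm w)\<^sup>2"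
      using descent[of f g L "x (k+1)" "x k", OF grad lip] unfolding w_def by simp
    have d2: "g (x k) \<bullet> w \<le> G \<bullet> w + L * \<beta> / h * (norm v * norm w)"
    proof -
      have "(g (x k) - G) \<bullet> w \<le> norm (g (x k) - G) * norm w" by (rule norm_cauchy_schwarz)
      also have "\<dots> \<le> L * norm (x k - (x k + (\<beta> / h) *\<^sub>R v)) * norm w"
        using lip[of "x k" "x k + (\<beta> / h) *\<^sub>R v"] unfolding G_def by (intro mult_right_mono) auto
      also have "\<dots> = L * \<beta> / h * (norm v * norm w)" using hpos bnn by simp
      finally show ?thesis by (simp add: inner_diff_left)
    qed
    have pvw: "v \<bullet> w \<le> ((norm v)\<^sup>2 + (norm w)\<^sup>2) / 2"
    proof -
      have "v \<bullet> w \<le> norm v * norm w" by (rule norm_cauchy_schwarz)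
      also have "\<dots> \<le> ((norm v)\<^sup>2 + (norm w)\<^sup>2) / 2" using power2_diff[of "norm v" "norm w"] zero_le_power2[of "norm v - norm w"] by (simp add: mult.assoc)
      finally show ?thesis .
    qed
    have nvw: "norm v * norm w \<le> ((norm v)\<^sup>2 + (norm w)\<^sup>2) / 2" using power2_diff[of "norm v" "norm w"] zero_le_power2[of "norm v - norm w"] by (simp add: mult.assoc)
    define nv where "nv = (norm v)\<^sup>2"
    define nw where "nw = (norm w)\<^sup>2"
    have Gw: "G \<bullet> w = (v \<bullet> w) / h\<^sup>2 - nw / h\<^sup>2 - \<gamma>' * nw / h"
    proof -
      have "G \<bullet> w = (h\<^sup>2 * (G \<bullet> w)) / h\<^sup>2" using hpos by simp
      also have "\<dots> = (v \<bullet> w - (1 + \<gamma>' * h) * nw) / h\<^sup>2" using q unfolding nw_def by simp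
      also have "\<dots> = (v \<bullet> w) / h\<^sup>2 - nw / h\<^sup>2 - \<gamma>' * nw / h"
        using hpos by (simp add: diff_divide_distrib add_divide_distrib distrib_right power2_eq_square)
      finally show ?thesis .
    qed
    have b1: "(v \<bullet> w) / h\<^sup>2 \<le> ((nv + nw) / 2) / h\<^sup>2"
      using pvw hpos unfolding nv_def nw_def by (intro divide_right_mono) auto
    have b2: "L * \<beta> / h * (norm v * norm w) \<le> L * \<beta> / h * ((nv + nw) / 2)"
      using nvw Lpos bnn hpos unfolding nv_def nw_def by (intro mult_left_mono) auto
    have b3: "- \<gamma>' * nw / h \<le> - c * nw / h"
      using gc hpos unfolding nw_def by (simp add: divide_right_mono mult_right_mono)
    have eq: "((nv + nw) / 2) / h\<^sup>2 - nw / h\<^sup>2 - c * nw / h + L * \<beta> / h * ((nv + nw) / 2)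
              + L / 2 * nw + \<alpha>t / 2 * nw = \<alpha>t / 2 * nv - \<delta> * nw"
      unfolding \<alpha>t_def \<delta>_def using hpos by (simp add: field_simps power2_eq_square)
    have "f (x (k+1)) + \<alpha>t / 2 * nw \<le> f (x k) + \<alpha>t / 2 * nv - \<delta> * nw"
      using d1 d2 Gw b1 b2 b3 eq unfolding nw_def[symmetric] by linarith
    thus ?thesis unfolding nv_def nw_def v_def w_def .
  qed
  show ?thesis unfolding Let_def
    using dpos main unfolding \<delta>_def[symmetric] \<alpha>t_def[symmetric] by auto
qed

end
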